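(* Let $N_1,\dots,N_d$ be positive integers and $X\subseteq[N_1]\times\cdots\times[N_d]$. For any power of two $s$ with $1\le s\le\min_{1\le i\le d}N_i$, \[ f(s,X)\le5^d\frac{N_1\cdots N_d}{s^{d+1}}|X|. \]
   Context: $[N]=\{1,\dots,N\}$. For $\mathbf{b}\in\mathbb{Z}^d\setminus\{\mathbf{0}\}$, points $\mathbf{x},\mathbf{x}'$ are congruent mod $\mathbf{b}$ if $\mathbf{x}-\mathbf{x}'\in\mathbb{Z}\mathbf{b}$. For each $\mathbf{b}\ne\mathbf{0}$ and each congruence class $I$ of $X$ modulo $\mathbf{b}$, list $I=\{\mathbf{x}_1,\dots,\mathbf{x}_l\}$ in increasing order of $\mathbf{x}_u\cdot\mathbf{b}$. $\mathcal{C}_X$ is the collection, over all such $(\mathbf{b},I)$, of the sets $\{\mathbf{x}_u:(j-1)s'+1\le u\le js'\}$ with $s'=2^t$ ($t\ge0$) and $1\le j\le\lfloor l/s'\rfloor$. $f(s,X)$ is the number of sets of size $s$ in $\mathcal{C}_X$. *)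

theory Defs
  imports Complex_Main
begin

(* Points of Z^d are integer lists of length d. *)

definition dotp :: "int list \<Rightarrow> int list \<Rightarrow> int" where
  "dotp x y = sum_list (map2 (*) x y)"

definition congr_mod :: "int list \<Rightarrow> int list \<Rightarrow> int list \<Rightarrow> bool" where
  "congr_mod b x x' \<longleftrightarrow> length x = length b \<and> length x' = length b \<and>
     (\<exists>k::int. \<forall>i<length b. x ! i - x' ! i = k * b ! i)"

definition cong_classes :: "int list \<Rightarrow> int list set \<Rightarrow> int list set set" where
  "cong_classes b X = {{y \<in> X. congr_mod b x y} | x. x \<in> X}"

(* position (1-indexed) of x in I when I is listed in increasing order of x \<bullet> b *)
definition rank_in :: "int list \<Rightarrow> int list set \<Rightarrow> int list \<Rightarrow> nat" where
  "rank_in b I x = card {y \<in> I. dotp y b \<le> dotp x b}"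

definition CX :: "nat \<Rightarrow> int list set \<Rightarrow> int list set set" where
  "CX d X = {S. \<exists>b I (t::nat) (j::nat).
      length b = d \<and> b \<noteq> replicate d 0 \<and> I \<in> cong_classes b X \<and>
      1 \<le> j \<and> j \<le> card I div 2 ^ t \<and>
      S = {x \<in> I. (j - 1) * 2 ^ t + 1 \<le> rank_in b I x \<and> rank_in b I x \<le> j * 2 ^ t}}"

definition fcount :: "nat \<Rightarrow> nat \<Rightarrow> int list set \<Rightarrow> nat" where
  "fcount d s X = card {S \<in> CX d X. card S = s}"

end

theory Submission
  imports Defs
begin

lemma dotp_sum:
  assumes "length x = length b"
  shows "dotp x b = (\<Sum>i<length b. x ! i * b ! i)"
  using assms by (simp add: dotp_def sum_list_sum_nth atLeast0LessThan)

lemma congr_sym: "congr_mod b x y \<Longrightarrow> congr_mod b y x"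
  unfolding congr_mod_def
proof (elim conjE exE)
  fix k assume "length x = length b" "length y = length b" "\<forall>i<length b. x ! i - y ! i = k * b ! i"
  then show "length y = length b \<and> length x = length b \<and> (\<exists>k. \<forall>i<length b. y ! i - x ! i = k * b ! i)"
    by (intro conjI exI[of _ "-k"]) (auto simp: algebra_simps)
qed

lemma congr_trans: "congr_mod b x y \<Longrightarrow> congr_mod b y z \<Longrightarrow> congr_mod b x z"
  unfolding congr_mod_def
proof (elim conjE exE)
  fix k l assume "length x = length b" "length y = length b" "length z = length b"
    "\<forall>i<length b. x ! i - y ! i = k * b ! i" "\<forall>i<length b. y ! i - z ! i = l * b ! i"
  then show "length x = length b \<and> length z = length b \<and> (\<exists>k. \<forall>i<length b. x ! i - z ! i = k * b ! i)"
  proof (intro conjI exI[of _ "k+l"] allI impI)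
    fix i assume "i < length b"
    hence "x ! i - y ! i = k * b ! i" "y ! i - z ! i = l * b ! i" using \<open>\<forall>i<length b. x ! i - y ! i = k * b ! i\<close> \<open>\<forall>i<length b. y ! i - z ! i = l * b ! i\<close> by auto
    thus "x ! i - z ! i = (k + l) * b ! i" by (simp add: algebra_simps)
  qed simp_all
qed

lemma classes_eq:
  assumes "I \<in> cong_classes b X" "I' \<in> cong_classes b X" "z \<in> I" "z \<in> I'"
  shows "I = I'"
proof -
  obtain x where x: "I = {y \<in> X. congr_mod b x y}" using assms(1) unfolding cong_classes_def by auto
  obtain x' where x': "I' = {y \<in> X. congr_mod b x' y}" using assms(2) unfolding cong_classes_def by auto
  have "congr_mod b x z" "congr_mod b x' z" using assms x x' by auto
  hence "congr_mod b x x'" "congr_mod b x' x" using congr_sym congr_trans by blast+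
  thus ?thesis using x x' congr_sym congr_trans by blast
qed

lemma class_sub: "I \<in> cong_classes b X \<Longrightarrow> I \<subseteq> X"
  unfolding cong_classes_def by auto

lemma class_congr:
  assumes "I \<in> cong_classes b X" "y \<in> I" "z \<in> I"
  shows "congr_mod b y z"
proof -
  obtain x where x: "I = {y \<in> X. congr_mod b x y}" using assms(1) unfolding cong_classes_def by auto
  thus ?thesis using assms congr_sym congr_trans by blast
qed

lemma nz_exists:
  assumes "b \<noteq> replicate (length b) 0"
  shows "\<exists>i<length b. b ! i \<noteq> (0::int)"
  using assms by (metis in_set_conv_nth replicate_eqI)

lemma dotp_inj:
  assumes "congr_mod b y z" "b \<noteq> replicate (length b) 0" "dotp y b = dotp z b"
  shows "y = z"
proof -
  obtain k where k: "length y = length b" "length z = length b" "\<forall>i<length b. y ! i - z ! i = k * b ! i"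
    using assms(1) unfolding congr_mod_def by auto
  obtain i0 where i0: "i0 < length b" "b ! i0 \<noteq> 0" using nz_exists assms(2) by blast
  have "dotp y b - dotp z b = (\<Sum>i<length b. (y ! i - z ! i) * b ! i)"
    using k by (simp add: dotp_sum flip: sum_subtractf left_diff_distrib)
  also have "\<dots> = k * (\<Sum>i<length b. b ! i * b ! i)"
    using k by (simp add: sum_distrib_left mult.assoc)
  finally have e: "k * (\<Sum>i<length b. b ! i * b ! i) = 0" using assms(3) by simp
  have "(\<Sum>i<length b. b ! i * b ! i) > 0"
  proof -
    have "(\<Sum>i<length b. b ! i * b ! i) \<ge> b ! i0 * b ! i0"
      using i0 by (intro member_le_sum) auto
    moreover have "b ! i0 * b ! i0 > 0" using i0 by (auto simp: zero_less_mult_iff linorder_neq_iff)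
    ultimately show ?thesis by linarith
  qed
  hence "k = 0" using e by simp
  thus ?thesis using k by (intro nth_equalityI) auto
qed


lemma rank_props:
  assumes fin: "finite I" and inj: "\<And>y z. y \<in> I \<Longrightarrow> z \<in> I \<Longrightarrow> dotp y b = dotp z b \<Longrightarrow> y = z"
  shows "inj_on (rank_in b I) I" "rank_in b I ` I = {1..card I}"
proof -
  have lt: "rank_in b I y < rank_in b I z" if "y \<in> I" "z \<in> I" "dotp y b < dotp z b" for y z
  proof -
    have "{w \<in> I. dotp w b \<le> dotp y b} \<subset> {w \<in> I. dotp w b \<le> dotp z b}"
    proof
      show "{w \<in> I. dotp w b \<le> dotp y b} \<subseteq> {w \<in> I. dotp w b \<le> dotp z b}" using that by auto
      have "z \<notin> {w \<in> I. dotp w b \<le> dotp y b}" using that by auto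
      moreover have "z \<in> {w \<in> I. dotp w b \<le> dotp z b}" using that by auto
      ultimately show "{w \<in> I. dotp w b \<le> dotp y b} \<noteq> {w \<in> I. dotp w b \<le> dotp z b}" by blast
    qed
    thus ?thesis unfolding rank_in_def by (intro psubset_card_mono) (use fin in auto)
  qed
  show i: "inj_on (rank_in b I) I"
  proof (rule inj_onI)
    fix y z assume "y \<in> I" "z \<in> I" "rank_in b I y = rank_in b I z"
    thus "y = z" using lt[of y z] lt[of z y] inj[of y z] by (metis less_irrefl linorder_neq_iff)
  qed
  have sub: "rank_in b I ` I \<subseteq> {1..card I}"
  proof
    fix r assume "r \<in> rank_in b I ` I"
    then obtain y where y: "y \<in> I" "r = rank_in b I y" by auto
    have "card {w \<in> I. dotp w b \<le> dotp y b} \<ge> 1"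
      using y fin by (metis (mono_tags, lifting) One_nat_def Suc_leI card_gt_0_iff empty_iff finite_subset
          mem_Collect_eq mem_Collect_eq order_refl subsetI)
    moreover have "card {w \<in> I. dotp w b \<le> dotp y b} \<le> card I" using fin by (intro card_mono) auto
    ultimately show "r \<in> {1..card I}" using y unfolding rank_in_def by auto
  qed
  have "card (rank_in b I ` I) = card {1..card I}" using card_image[OF i] by simp
  thus "rank_in b I ` I = {1..card I}" using sub by (intro card_subset_eq) auto
qed

lemma block_card:
  assumes fin: "finite I" and inj: "\<And>y z. y \<in> I \<Longrightarrow> z \<in> I \<Longrightarrow> dotp y b = dotp z b \<Longrightarrow> y = z"
    and "1 \<le> j" "j * p \<le> card I"
  shows "card {x \<in> I. (j - 1) * p + 1 \<le> rank_in b I x \<and> rank_in b I x \<le> j * p} = p"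
proof -
  let ?S = "{x \<in> I. (j - 1) * p + 1 \<le> rank_in b I x \<and> rank_in b I x \<le> j * p}"
  note rp = rank_props[OF fin inj]
  have "rank_in b I ` ?S = {(j - 1) * p + 1 .. j * p}"
  proof
    show "rank_in b I ` ?S \<subseteq> {(j - 1) * p + 1 .. j * p}" by auto
    show "{(j - 1) * p + 1 .. j * p} \<subseteq> rank_in b I ` ?S"
    proof
      fix r assume r: "r \<in> {(j - 1) * p + 1 .. j * p}"
      hence "r \<in> {1..card I}" using assms(4) by auto
      then obtain y where "y \<in> I" "r = rank_in b I y" using rp(2) by force
      thus "r \<in> rank_in b I ` ?S" using r by auto
    qed
  qed
  moreover have "card (rank_in b I ` ?S) = card ?S"
    by (rule card_image, rule inj_on_subset[OF rp(1)]) auto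
  moreover have "j * p + 1 - ((j - 1) * p + 1) = p" using assms(3)
    by (cases j) (auto simp: algebra_simps)
  ultimately show ?thesis by simp
qed


definition Fb :: "int list \<Rightarrow> nat \<Rightarrow> int list set \<Rightarrow> int list set set" where
  "Fb b s X = {S. \<exists>I (t::nat) (j::nat). I \<in> cong_classes b X \<and>
      1 \<le> j \<and> j \<le> card I div 2 ^ t \<and>
      S = {x \<in> I. (j - 1) * 2 ^ t + 1 \<le> rank_in b I x \<and> rank_in b I x \<le> j * 2 ^ t} \<and> card S = s}"

lemma Fb_sub: "S \<in> Fb b s X \<Longrightarrow> S \<subseteq> X"
  unfolding Fb_def using class_sub by blast

lemma Fb_disj:
  assumes fin: "finite X" and nz: "b \<noteq> replicate (length b) 0"
    and S1: "S1 \<in> Fb b s X" and S2: "S2 \<in> Fb b s X" and x: "x \<in> S1" "x \<in> S2"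
  shows "S1 = S2"
proof -
  obtain I1 t1 j1 where A: "I1 \<in> cong_classes b X" "1 \<le> j1" "j1 \<le> card I1 div 2 ^ t1"
    "S1 = {x \<in> I1. (j1 - 1) * 2 ^ t1 + 1 \<le> rank_in b I1 x \<and> rank_in b I1 x \<le> j1 * 2 ^ t1}" "card S1 = s"
    using S1 unfolding Fb_def by blast
  obtain I2 t2 j2 where B: "I2 \<in> cong_classes b X" "1 \<le> j2" "j2 \<le> card I2 div 2 ^ t2"
    "S2 = {x \<in> I2. (j2 - 1) * 2 ^ t2 + 1 \<le> rank_in b I2 x \<and> rank_in b I2 x \<le> j2 * 2 ^ t2}" "card S2 = s"
    using S2 unfolding Fb_def by blast
  have xI1: "x \<in> I1" using x(1) unfolding A(4) by simp
  have xI2: "x \<in> I2" using x(2) unfolding B(4) by simp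
  have "I1 = I2" by (rule classes_eq[OF A(1) B(1) xI1 xI2])
  have finI: "finite I1" using class_sub[OF A(1)] fin finite_subset by blast
  have inj: "\<And>y z. y \<in> I1 \<Longrightarrow> z \<in> I1 \<Longrightarrow> dotp y b = dotp z b \<Longrightarrow> y = z"
  proof -
    fix y z assume "y \<in> I1" "z \<in> I1" "dotp y b = dotp z b"
    thus "y = z" using dotp_inj[OF class_congr[OF A(1)] nz] by blast
  qed
  have "j1 * 2 ^ t1 \<le> card I1" using A(3) by (simp add: less_eq_div_iff_mult_less_eq)
  hence c1: "card S1 = 2 ^ t1" using block_card[OF finI inj A(2)] A(4) by simp
  have "j2 * 2 ^ t2 \<le> card I1" using B(3) \<open>I1 = I2\<close> by (simp add: less_eq_div_iff_mult_less_eq)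
  hence c2: "card S2 = 2 ^ t2" using block_card[OF finI inj B(2)] B(4) \<open>I1 = I2\<close> by simp
  have p: "(2::nat) ^ t1 = 2 ^ t2" using c1 c2 A(5) B(5) by simp
  define p where "p = (2::nat) ^ t1"
  define r where "r = rank_in b I1 x"
  have r1: "(j1 - 1) * p + 1 \<le> r" "r \<le> j1 * p" using x A(4) unfolding p_def r_def by auto
  have r2: "(j2 - 1) * p + 1 \<le> r" "r \<le> j2 * p" using x B(4) p \<open>I1 = I2\<close> unfolding p_def r_def by auto
  have "j1 = j2"
  proof (rule ccontr)
    assume "j1 \<noteq> j2"
    hence "j1 \<le> j2 - 1 \<or> j2 \<le> j1 - 1" by auto
    thus False
    proof
      assume "j1 \<le> j2 - 1"
      hence "j1 * p \<le> (j2 - 1) * p" by (rule mult_right_mono) simp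
      thus False using r1 r2 by linarith
    next
      assume "j2 \<le> j1 - 1"
      hence "j2 * p \<le> (j1 - 1) * p" by (rule mult_right_mono) simp
      thus False using r1 r2 by linarith
    qed
  qed
  show ?thesis unfolding A(4) B(4) \<open>j1 = j2\<close> \<open>I1 = I2\<close> p ..
qed

lemma Fb_bound:
  assumes fin: "finite X" and nz: "b \<noteq> replicate (length b) 0"
  shows "card (Fb b s X) * s \<le> card X"
proof -
  have finF: "finite (Fb b s X)"
  proof -
    have "Fb b s X \<subseteq> Pow X" using Fb_sub by blast
    thus ?thesis using fin finite_subset by blast
  qed
  have "card (\<Union>(Fb b s X)) = sum card (Fb b s X)"
  proof (rule card_Union_disjoint)
    show "pairwise disjnt (Fb b s X)"
    proof (rule pairwiseI)
      fix S1 S2 assume h: "S1 \<in> Fb b s X" "S2 \<in> Fb b s X" "S1 \<noteq> S2"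
      show "disjnt S1 S2" unfolding disjnt_def
      proof (rule ccontr)
        assume "S1 \<inter> S2 \<noteq> {}"
        then obtain x where "x \<in> S1" "x \<in> S2" by blast
        thus False using Fb_disj[OF fin nz h(1) h(2)] h(3) by blast
      qed
    qed
    show "\<And>A. A \<in> Fb b s X \<Longrightarrow> finite A" using Fb_sub fin by (meson finite_subset)
  qed
  also have "\<dots> = sum (\<lambda>_. s) (Fb b s X)"
  proof (rule sum.cong)
    fix S assume "S \<in> Fb b s X"
    thus "card S = s" unfolding Fb_def by blast
  qed simp
  also have "\<dots> = card (Fb b s X) * s" by simp
  finally have "card (\<Union>(Fb b s X)) = card (Fb b s X) * s" .
  moreover have "card (\<Union>(Fb b s X)) \<le> card X"
    by (rule card_mono[OF fin]) (use Fb_sub[of _ b s X] in blast)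
  ultimately show ?thesis by simp
qed


lemma geom:
  assumes X: "X \<subseteq> {x. length x = d \<and> (\<forall>i<d. 1 \<le> x ! i \<and> x ! i \<le> int (N ! i))}"
    and lb: "length b = d" and nz: "b \<noteq> replicate d 0"
    and I: "I \<in> cong_classes b X" and SI: "S \<subseteq> I" and cS: "card S = s" and s2: "2 \<le> s"
    and i: "i < d"
  shows "\<bar>b ! i\<bar> * (int s - 1) \<le> int (N ! i) - 1"
proof -
  have finS: "finite S" using cS s2 card.infinite by fastforce
  have "S \<noteq> {}" using cS s2 by auto
  then obtain x0 where x0: "x0 \<in> S" by blast
  obtain i0 where i0: "i0 < d" "b ! i0 \<noteq> 0" using nz_exists[of b] nz lb by blast
  define v where "v = (\<lambda>k::int. map (\<lambda>i. x0 ! i - k * b ! i) [0..<d])"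
  define K where "K = {k. v k \<in> S}"
  have injv: "inj v"
  proof (rule injI)
    fix k1 k2 assume "v k1 = v k2"
    hence "v k1 ! i0 = v k2 ! i0" by simp
    hence "k1 * b ! i0 = k2 * b ! i0" using i0 unfolding v_def by simp
    thus "k1 = k2" using i0 by simp
  qed
  have SvK: "S = v ` K"
  proof
    show "v ` K \<subseteq> S" unfolding K_def by auto
    show "S \<subseteq> v ` K"
    proof
      fix y assume y: "y \<in> S"
      have "congr_mod b x0 y" using class_congr[OF I] x0 y SI by blast
      then obtain k where k: "length x0 = d" "length y = d" "\<forall>i<d. x0 ! i - y ! i = k * b ! i"
        unfolding congr_mod_def using lb by auto
      have "y = v k" unfolding v_def using k by (intro nth_equalityI) (auto simp: algebra_simps)
      thus "y \<in> v ` K" unfolding K_def using y by auto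
    qed
  qed
  have finK: "finite K" using finS SvK injv by (metis finite_imageD inj_on_subset subset_UNIV)
  have cK: "card K = s" using cS SvK card_image injv by (metis inj_on_subset subset_UNIV)
  have Kne: "K \<noteq> {}" using cK s2 by auto
  define kM where "kM = Max K"
  define km where "km = Min K"
  have kMK: "kM \<in> K" and kmK: "km \<in> K" using finK Kne unfolding kM_def km_def by auto
  have "K \<subseteq> {km..kM}" using finK unfolding kM_def km_def by auto
  hence "card K \<le> card {km..kM}" by (intro card_mono) auto
  hence "int s \<le> kM - km + 1" using cK s2 by simp
  hence dk: "int s - 1 \<le> kM - km" by simp
  have "v kM \<in> X" "v km \<in> X" using kMK kmK SI class_sub[OF I] unfolding K_def by auto
  hence bnd: "1 \<le> v kM ! i" "v kM ! i \<le> int (N ! i)" "1 \<le> v km ! i" "v km ! i \<le> int (N ! i)"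
    using X i by auto
  have "v km ! i - v kM ! i = (kM - km) * b ! i" using i unfolding v_def by (simp add: algebra_simps)
  hence "\<bar>(kM - km) * b ! i\<bar> \<le> int (N ! i) - 1" using bnd by linarith
  hence "(kM - km) * \<bar>b ! i\<bar> \<le> int (N ! i) - 1" using dk s2 by (simp add: abs_mult)
  moreover have "(int s - 1) * \<bar>b ! i\<bar> \<le> (kM - km) * \<bar>b ! i\<bar>" using dk by (intro mult_right_mono) auto
  ultimately show ?thesis by (simp add: mult.commute)
qed


fun boxes :: "nat list \<Rightarrow> int list set" where
  "boxes [] = {[]}"
| "boxes (c # cs) = (\<lambda>(x, xs). x # xs) ` ({- int c..int c} \<times> boxes cs)"

lemma boxes_mem: "xs \<in> boxes cs \<longleftrightarrow> length xs = length cs \<and> (\<forall>i<length cs. \<bar>xs ! i\<bar> \<le> int (cs ! i))"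
proof (induction cs arbitrary: xs)
  case Nil
  then show ?case by auto
next
  case (Cons c cs)
  show ?case
  proof (cases xs)
    case Nil
    then show ?thesis by auto
  next
    case (Cons y ys)
    have "xs \<in> boxes (c # cs) \<longleftrightarrow> \<bar>y\<bar> \<le> int c \<and> ys \<in> boxes cs"
    proof
      assume "xs \<in> boxes (c # cs)" thus "\<bar>y\<bar> \<le> int c \<and> ys \<in> boxes cs" using Cons by auto
    next
      assume h: "\<bar>y\<bar> \<le> int c \<and> ys \<in> boxes cs"
      hence "(y, ys) \<in> {- int c..int c} \<times> boxes cs" by auto
      hence "(\<lambda>(x, xs). x # xs) (y, ys) \<in> boxes (c # cs)" by (simp only: boxes.simps) (rule imageI)
      thus "xs \<in> boxes (c # cs)" using Cons by simp
    qed
    also have "\<dots> \<longleftrightarrow> length xs = length (c # cs) \<and> (\<forall>i<length (c # cs). \<bar>xs ! i\<bar> \<le> int ((c # cs) ! i))"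
      using Cons Cons.IH by (auto simp: less_Suc_eq_0_disj nth_Cons split: nat.splits)
    finally show ?thesis .
  qed
qed

lemma boxes_card: "finite (boxes cs) \<and> card (boxes cs) = prod_list (map (\<lambda>c. 2 * c + 1) cs)"
proof (induction cs)
  case Nil
  then show ?case by simp
next
  case (Cons c cs)
  have inj: "inj_on (\<lambda>(x, xs). x # xs) ({- int c..int c} \<times> boxes cs)"
    by (auto simp: inj_on_def)
  have "card {- int c..int c} = 2 * c + 1" by simp
  then show ?case using Cons card_image[OF inj] by (simp add: card_cartesian_product)
qed

lemma arith_step:
  fixes n s :: nat
  assumes "2 \<le> s" "s \<le> n"
  shows "(2 * ((n - 1) div (s - 1)) + 1) * s \<le> 5 * n"
proof -
  define c where "c = (n - 1) div (s - 1)"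
  obtain s' where s': "s = Suc s'" "1 \<le> s'" using assms(1) by (cases s) auto
  have h1: "c * s' \<le> n - 1" unfolding c_def using s' div_times_less_eq_dividend[of "n - 1" s'] by simp
  have h2: "c \<le> c * s'" using s' by simp
  have "(2 * c + 1) * s = 2 * (c * s') + 2 * c + s" using s' by (simp add: algebra_simps)
  thus ?thesis unfolding c_def[symmetric] using h1 h2 assms by linarith
qed

lemma box_bound:
  fixes s :: nat
  assumes "2 \<le> s" "\<forall>n\<in>set N. s \<le> n"
  shows "prod_list (map (\<lambda>c. 2 * c + 1) (map (\<lambda>n. (n - 1) div (s - 1)) N)) * s ^ length N \<le> 5 ^ length N * prod_list N"
  using assms(2)
proof (induction N)
  case Nil
  then show ?case by simp
next
  case (Cons n N)
  have a: "(2 * ((n - 1) div (s - 1)) + 1) * s \<le> 5 * n" using arith_step[OF assms(1)] Cons.prems by simp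
  have b: "prod_list (map (\<lambda>c. 2 * c + 1) (map (\<lambda>n. (n - 1) div (s - 1)) N)) * s ^ length N \<le> 5 ^ length N * prod_list N"
    using Cons by simp
  have "prod_list (map (\<lambda>c. 2 * c + 1) (map (\<lambda>n. (n - 1) div (s - 1)) (n # N))) * s ^ length (n # N)
     = ((2 * ((n - 1) div (s - 1)) + 1) * s) * (prod_list (map (\<lambda>c. 2 * c + 1) (map (\<lambda>n. (n - 1) div (s - 1)) N)) * s ^ length N)"
    by (simp add: algebra_simps)
  also have "\<dots> \<le> (5 * n) * (5 ^ length N * prod_list N)" using a b by (rule mult_le_mono)
  also have "\<dots> = 5 ^ length (n # N) * prod_list (n # N)" by (simp add: algebra_simps)
  finally show ?case .
qed


lemma CX_sub: "S \<in> CX d X \<Longrightarrow> S \<subseteq> X"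
  unfolding CX_def using class_sub by blast

theorem corollary2p4:
  fixes d :: nat and N :: "nat list" and X :: "int list set" and s :: nat
  assumes "length N = d"
    and "\<forall>i<d. 0 < N ! i"
    and "X \<subseteq> {x. length x = d \<and> (\<forall>i<d. 1 \<le> x ! i \<and> x ! i \<le> int (N ! i))}"
    and "\<exists>t::nat. s = 2 ^ t"
    and "1 \<le> s"
    and "\<forall>i<d. s \<le> N ! i"
  shows "real (fcount d s X) \<le> 5 ^ d * real (prod_list N) / real s ^ (d + 1) * real (card X)"
proof -
  have finX: "finite X"
  proof (rule finite_subset)
    show "X \<subseteq> {xs. set xs \<subseteq> {1..int (sum_list N)} \<and> length xs = d}"
    proof
      fix x assume x: "x \<in> X"
      have "set x \<subseteq> {1..int (sum_list N)}"
      proof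
        fix a assume "a \<in> set x"
        then obtain i where i: "i < length x" "a = x ! i" by (auto simp: in_set_conv_nth)
        have "length x = d" using x assms(3) by auto
        hence "1 \<le> a \<and> a \<le> int (N ! i)" using x assms(3) i by auto
        moreover have "N ! i \<le> sum_list N" using elem_le_sum_list[of i N] i \<open>length x = d\<close> assms(1) by simp
        ultimately show "a \<in> {1..int (sum_list N)}" by auto
      qed
      thus "x \<in> {xs. set xs \<subseteq> {1..int (sum_list N)} \<and> length xs = d}" using x assms(3) by auto
    qed
    show "finite {xs. set xs \<subseteq> {1..int (sum_list N)} \<and> length xs = d}"
      by (rule finite_lists_length_eq) simp
  qed
  have P: "prod_list N \<ge> 1"
  proof -
    have "0 \<notin> set N" using assms(1,2) by (auto simp: in_set_conv_nth)
    hence "prod_list N \<noteq> 0" by (simp add: prod_list_zero_iff)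
    thus ?thesis by simp
  qed
  have sN: "\<forall>n\<in>set N. s \<le> n" using assms(1,6) by (auto simp: in_set_conv_nth)
  have key: "fcount d s X * s ^ (d + 1) \<le> 5 ^ d * prod_list N * card X"
  proof (cases "s = 1")
    case True
    have "{S \<in> CX d X. card S = s} \<subseteq> (\<lambda>x. {x}) ` X"
    proof
      fix S assume S: "S \<in> {S \<in> CX d X. card S = s}"
      then obtain x where "S = {x}" using True by (auto simp: card_1_singleton_iff)
      moreover have "S \<subseteq> X" using CX_sub[of S d X] S by blast
      ultimately show "S \<in> (\<lambda>x. {x}) ` X" by blast
    qed
    hence "fcount d s X \<le> card ((\<lambda>x. {x}) ` X)" unfolding fcount_def
      using finX by (intro card_mono) auto
    also have "\<dots> \<le> card X" using finX by (rule card_image_le)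
    finally have "fcount d s X \<le> card X" .
    moreover have "card X \<le> 5 ^ d * prod_list N * card X"
    proof -
      have "1 \<le> 5 ^ d * prod_list N" using P by (simp add: one_le_mult_iff)
      thus ?thesis by simp
    qed
    ultimately have "fcount d s X \<le> 5 ^ d * prod_list N * card X" by (rule order_trans)
    thus ?thesis using True by simp
  next
    case False
    hence s2: "2 \<le> s" using assms(5) by simp
    define cs where "cs = map (\<lambda>n. (n - 1) div (s - 1)) N"
    define B where "B = boxes cs - {replicate d 0}"
    have finB: "finite B" unfolding B_def using boxes_card by blast
    have sub: "{S \<in> CX d X. card S = s} \<subseteq> (\<Union>b\<in>B. Fb b s X)"
    proof
      fix S assume S: "S \<in> {S \<in> CX d X. card S = s}"
      then obtain b I t j where bI: "length b = d" "b \<noteq> replicate d 0" "I \<in> cong_classes b X"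
        "1 \<le> j" "j \<le> card I div 2 ^ t"
        "S = {x \<in> I. (j - 1) * 2 ^ t + 1 \<le> rank_in b I x \<and> rank_in b I x \<le> j * 2 ^ t}"
        unfolding CX_def by blast
      have "S \<in> Fb b s X" unfolding Fb_def using bI S by blast
      moreover have "b \<in> boxes cs"
        unfolding boxes_mem
      proof
        show "length b = length cs" using bI assms(1) unfolding cs_def by simp
        show "\<forall>i<length cs. \<bar>b ! i\<bar> \<le> int (cs ! i)"
        proof (intro allI impI)
          fix i assume "i < length cs"
          hence i: "i < d" using assms(1) unfolding cs_def by simp
          have g: "\<bar>b ! i\<bar> * (int s - 1) \<le> int (N ! i) - 1"
          proof -
            have "S \<subseteq> I" using bI(6) by blast
            moreover have "card S = s" using S by blast
            ultimately show ?thesis by (rule geom[OF assms(3) bI(1) bI(2) bI(3) _ _ s2 i])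
          qed
          have Ni: "N ! i \<ge> 1" using assms(2) i by auto
          have "int (cs ! i) = int ((N ! i - 1) div (s - 1))" unfolding cs_def using i assms(1) by simp
          also have "\<dots> = (int (N ! i) - 1) div (int s - 1)" using Ni s2 by (simp add: zdiv_int of_nat_diff)
          finally have ci: "int (cs ! i) = (int (N ! i) - 1) div (int s - 1)" .
          have "\<bar>b ! i\<bar> * (int s - 1) div (int s - 1) \<le> (int (N ! i) - 1) div (int s - 1)"
            using g s2 by (intro zdiv_mono1) auto
          moreover have "\<bar>b ! i\<bar> * (int s - 1) div (int s - 1) = \<bar>b ! i\<bar>" using s2 by simp
          ultimately show "\<bar>b ! i\<bar> \<le> int (cs ! i)" using ci by simp
        qed
      qed
      ultimately show "S \<in> (\<Union>b\<in>B. Fb b s X)" unfolding B_def using bI(2) by blast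
    qed
    have "fcount d s X \<le> card (\<Union>b\<in>B. Fb b s X)" unfolding fcount_def
    proof (rule card_mono[OF _ sub])
      have "(\<Union>b\<in>B. Fb b s X) \<subseteq> Pow X" using Fb_sub[of _ _ s X] by blast
      thus "finite (\<Union>b\<in>B. Fb b s X)" using finX finite_subset by blast
    qed
    also have "\<dots> \<le> (\<Sum>b\<in>B. card (Fb b s X))" using finB by (rule card_UN_le)
    finally have "fcount d s X * s \<le> (\<Sum>b\<in>B. card (Fb b s X)) * s" by simp
    also have "\<dots> = (\<Sum>b\<in>B. card (Fb b s X) * s)" by (simp add: sum_distrib_right)
    also have "\<dots> \<le> (\<Sum>b\<in>B. card X)"
    proof (rule sum_mono)
      fix b assume "b \<in> B"
      hence "length b = d" "b \<noteq> replicate d 0" unfolding B_def cs_def using boxes_mem assms(1) by auto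
      thus "card (Fb b s X) * s \<le> card X" using Fb_bound[OF finX] by simp
    qed
    also have "\<dots> = card B * card X" by simp
    also have "\<dots> \<le> card (boxes cs) * card X" unfolding B_def using boxes_card
      by (intro mult_le_mono1 card_mono) auto
    finally have h: "fcount d s X * s \<le> card (boxes cs) * card X" .
    have "fcount d s X * s ^ (d + 1) = (fcount d s X * s) * s ^ d" by (simp add: algebra_simps)
    also have "\<dots> \<le> (card (boxes cs) * card X) * s ^ d" using h by (rule mult_le_mono1)
    also have "\<dots> = (card (boxes cs) * s ^ d) * card X" by (simp add: algebra_simps)
    also have "\<dots> \<le> (5 ^ d * prod_list N) * card X"
    proof (rule mult_le_mono1)
      show "card (boxes cs) * s ^ d \<le> 5 ^ d * prod_list N"
        using box_bound[OF s2 sN] boxes_card[of cs] assms(1) unfolding cs_def by simp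
    qed
    finally show ?thesis .
  qed
  have "real (fcount d s X) * real s ^ (d + 1) \<le> 5 ^ d * real (prod_list N) * real (card X)"
    using of_nat_mono[OF key] by simp
  moreover have "real s ^ (d + 1) > 0" using assms(5) by simp
  ultimately show ?thesis by (simp add: field_simps)
qed

end
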